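(* Let $C>0$ be a constant such that for all real numbers $\{c_{ij}:1\le i,j\le 4\}$ one has $\min_{S\in\{-1,1\}^8}\sum_{1\le i,j\le 4}c_{ij}S_{u_i}S_{v_j}\le -C\sum_{1\le i,j\le 4}|c_{ij}|$ (such a constant exists, e.g. some $C>\ln(1+\sqrt2)/\pi$). Let $r$ be a positive integer, let $G_r=(V,E)$ be the Chimera graph with $E=E_0\cup E_1\cup E_{01}$, and let $c_{uv}\in\mathbb{R}$ for $(u,v)\in E$ and $d_u\in\mathbb{R}$ for $u\in V$ be arbitrary. Let $H^*=\min_{S\in\{-1,1\}^V}\left(\sum_{(u,v)\in E}c_{uv}S_uS_v+\sum_{u\in V}d_uS_u\right)$, $A_0=\sum_{(u,v)\in E_0}|c_{uv}|$, $A_1=\sum_{(u,v)\in E_1}|c_{uv}|$, and $A_{01}=\sum_{(u,v)\in E_{01}}|c_{uv}|$. Then $H^*\le A_0+A_1-CA_{01}$.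
   Context: The Chimera graph $G_r=(V,E)$: $V=\{(i,j,k,l)\in\mathbb{Z}^4: 1\le i,j\le r,\ 1\le k\le 4,\ l\in\{0,1\}\}$. $E=E_0\cup E_1\cup E_{01}$ (disjoint), where $E_0$ consists of the edges $\{(i,j,k,0),(i+1,j,k,0)\}$ for $1\le i\le r-1$, $1\le j\le r$, $1\le k\le 4$; $E_1$ consists of the edges $\{(i,j,k,1),(i,j+1,k,1)\}$ for $1\le i\le r$, $1\le j\le r-1$, $1\le k\le 4$; and $E_{01}$ consists of the edges $\{(i,j,k_0,0),(i,j,k_1,1)\}$ for $1\le i,j\le r$, $1\le k_0,k_1\le 4$. In the hypothesis on $C$, $u_1,\dots,u_4$ and $v_1,\dots,v_4$ denote the two sides of $K_{4,4}$. *)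

theory Defs
  imports Complex_Main "HOL-Library.FuncSet"
begin

type_synonym vtx = "nat \<times> nat \<times> nat \<times> nat"

text \<open>Chimera graph G_r. A vertex (i,j,k,l) with l in {0,1}. Each edge is
represented once, as the ordered pair listed in the paper's definition.\<close>

definition chimera_V :: "nat \<Rightarrow> vtx set" where
  "chimera_V r = {(i,j,k,l). 1 \<le> i \<and> i \<le> r \<and> 1 \<le> j \<and> j \<le> r \<and> 1 \<le> k \<and> k \<le> 4 \<and> l \<le> 1}"

definition chimera_E0 :: "nat \<Rightarrow> (vtx \<times> vtx) set" where
  "chimera_E0 r = {((i,j,k,0),(i+1,j,k,0)) | i j k.
      1 \<le> i \<and> i \<le> r - 1 \<and> 1 \<le> j \<and> j \<le> r \<and> 1 \<le> k \<and> k \<le> 4}"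

definition chimera_E1 :: "nat \<Rightarrow> (vtx \<times> vtx) set" where
  "chimera_E1 r = {((i,j,k,1),(i,j+1,k,1)) | i j k.
      1 \<le> i \<and> i \<le> r \<and> 1 \<le> j \<and> j \<le> r - 1 \<and> 1 \<le> k \<and> k \<le> 4}"

definition chimera_E01 :: "nat \<Rightarrow> (vtx \<times> vtx) set" where
  "chimera_E01 r = {((i,j,k0,0),(i,j,k1,1)) | i j k0 k1.
      1 \<le> i \<and> i \<le> r \<and> 1 \<le> j \<and> j \<le> r \<and> 1 \<le> k0 \<and> k0 \<le> 4 \<and> 1 \<le> k1 \<and> k1 \<le> 4}"

definition chimera_E :: "nat \<Rightarrow> (vtx \<times> vtx) set" where
  "chimera_E r = chimera_E0 r \<union> chimera_E1 r \<union> chimera_E01 r"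

definition ising_energy ::
  "nat \<Rightarrow> (vtx \<Rightarrow> vtx \<Rightarrow> real) \<Rightarrow> (vtx \<Rightarrow> real) \<Rightarrow> (vtx \<Rightarrow> real) \<Rightarrow> real" where
  "ising_energy r c d S =
     (\<Sum>e\<in>chimera_E r. c (fst e) (snd e) * S (fst e) * S (snd e)) + (\<Sum>u\<in>chimera_V r. d u * S u)"

definition ground_energy ::
  "nat \<Rightarrow> (vtx \<Rightarrow> vtx \<Rightarrow> real) \<Rightarrow> (vtx \<Rightarrow> real) \<Rightarrow> real" where
  "ground_energy r c d = Min (ising_energy r c d ` (chimera_V r \<rightarrow>\<^sub>E {-1, 1}))"

definition K44_min :: "(nat \<Rightarrow> nat \<Rightarrow> real) \<Rightarrow> real" where
  "K44_min c = Min ((\<lambda>(su, sv). \<Sum>i\<in>{1..4}. \<Sum>j\<in>{1..4}. c i j * su i * sv j) `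
                    (({1..4::nat} \<rightarrow>\<^sub>E {-1, 1}) \<times> ({1..4::nat} \<rightarrow>\<^sub>E {-1, 1})))"

end

theory Submission
  imports Defs
begin

definition PS :: "(nat \<Rightarrow> real) set" where "PS = {1..4::nat} \<rightarrow>\<^sub>E {-1, 1::real}"

definition K44val :: "(nat \<Rightarrow> nat \<Rightarrow> real) \<Rightarrow> (nat \<Rightarrow> real) \<times> (nat \<Rightarrow> real) \<Rightarrow> real" where
  "K44val c = (\<lambda>(su, sv). \<Sum>i\<in>{1..4}. \<Sum>j\<in>{1..4}. c i j * su i * sv j)"

definition pick :: "(nat \<Rightarrow> nat \<Rightarrow> real) \<Rightarrow> (nat \<Rightarrow> real) \<times> (nat \<Rightarrow> real)" where
  "pick a = (SOME p. p \<in> PS \<times> PS \<and> K44val a p = K44_min a)"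

lemma pick: "pick a \<in> PS \<times> PS \<and> K44val a (pick a) = K44_min a"
proof -
  have fin: "finite (PS \<times> PS)" unfolding PS_def by (intro finite_cartesian_product finite_PiE) auto
  have "(\<lambda>_\<in>{1..4::nat}. 1::real) \<in> PS" unfolding PS_def by auto
  hence ne: "PS \<times> PS \<noteq> {}" by blast
  have "K44_min a = Min (K44val a ` (PS \<times> PS))" unfolding K44_min_def K44val_def PS_def by simp
  hence "K44_min a \<in> K44val a ` (PS \<times> PS)" using Min_in[of "K44val a ` (PS \<times> PS)"] fin ne by auto
  then obtain p where "p \<in> PS \<times> PS" "K44val a p = K44_min a" by auto
  hence "\<exists>p. p \<in> PS \<times> PS \<and> K44val a p = K44_min a" by blast
  thus ?thesis unfolding pick_def by (rule someI_ex)
qed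

lemma V_img: "chimera_V r = (\<lambda>((i,j),(k,l)). (i,j,k,l)) ` (({1..r}\<times>{1..r}) \<times> ({1..4}\<times>{0..1}))"
  unfolding chimera_V_def by (auto simp: image_iff)

lemma V_inj: "inj_on (\<lambda>((i::nat,j::nat),(k::nat,l::nat)). (i,j,k,l)) A"
  by (auto simp: inj_on_def)

lemma E01_img: "chimera_E01 r = (\<lambda>((i,j),(k0,k1)). ((i,j,k0,0::nat),(i,j,k1,1::nat))) ` (({1..r}\<times>{1..r}) \<times> ({1..4}\<times>{1..4}))"
  unfolding chimera_E01_def by (auto simp: image_iff) 

lemma E01_inj: "inj_on (\<lambda>((i::nat,j::nat),(k0::nat,k1::nat)). ((i,j,k0,0::nat),(i,j,k1,1::nat))) A"
  by (auto simp: inj_on_def)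

lemma finV: "finite (chimera_V r)"
  unfolding V_img by auto

lemma E0_sub: "r \<ge> 1 \<Longrightarrow> chimera_E0 r \<subseteq> chimera_V r \<times> chimera_V r"
  unfolding chimera_E0_def chimera_V_def by auto

lemma E1_sub: "r \<ge> 1 \<Longrightarrow> chimera_E1 r \<subseteq> chimera_V r \<times> chimera_V r"
  unfolding chimera_E1_def chimera_V_def by auto

lemma E01_sub: "chimera_E01 r \<subseteq> chimera_V r \<times> chimera_V r"
  unfolding chimera_E01_def chimera_V_def by auto

lemma sum_E01:
  fixes f :: "vtx \<times> vtx \<Rightarrow> real"
  shows "(\<Sum>e\<in>chimera_E01 r. f e) = (\<Sum>p\<in>{1..r}\<times>{1..r}. \<Sum>k0\<in>{1..4}. \<Sum>k1\<in>{1..4}.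
            f ((fst p, snd p, k0, 0), (fst p, snd p, k1, 1)))"
proof -
  have "(\<Sum>e\<in>chimera_E01 r. f e) = (\<Sum>x\<in>({1..r}\<times>{1..r}) \<times> ({1..4}\<times>{1..4}).
          f ((\<lambda>((i,j),(k0,k1)). ((i,j,k0,0::nat),(i,j,k1,1::nat))) x))"
    unfolding E01_img by (subst sum.reindex[OF E01_inj]) (simp add: comp_def)
  also have "\<dots> = (\<Sum>p\<in>{1..r}\<times>{1..r}. \<Sum>q\<in>{1..4}\<times>{1..4}. f ((fst p, snd p, fst q, 0), (fst p, snd p, snd q, 1)))"
    unfolding sum.cartesian_product by (intro sum.cong refl) (auto simp: case_prod_beta)
  also have "\<dots> = (\<Sum>p\<in>{1..r}\<times>{1..r}. \<Sum>k0\<in>{1..4}. \<Sum>k1\<in>{1..4}.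
            f ((fst p, snd p, k0, 0), (fst p, snd p, k1, 1)))"
    unfolding sum.cartesian_product by (intro sum.cong refl) (auto simp: case_prod_beta)
  finally show ?thesis .
qed

lemma sum_V:
  fixes f :: "vtx \<Rightarrow> real"
  shows "(\<Sum>u\<in>chimera_V r. f u) = (\<Sum>p\<in>{1..r}\<times>{1..r}. \<Sum>k\<in>{1..4}. \<Sum>l\<in>{0..1}.
            f (fst p, snd p, k, l))"
proof -
  have "(\<Sum>u\<in>chimera_V r. f u) = (\<Sum>x\<in>({1..r}\<times>{1..r}) \<times> ({1..4}\<times>{0..1}).
          f ((\<lambda>((i,j),(k,l)). (i,j,k,l)) x))"
    unfolding V_img by (subst sum.reindex[OF V_inj]) (simp add: comp_def)
  also have "\<dots> = (\<Sum>p\<in>{1..r}\<times>{1..r}. \<Sum>q\<in>{1..4}\<times>{0..1}. f (fst p, snd p, fst q, snd q))"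
    unfolding sum.cartesian_product by (intro sum.cong refl) (auto simp: case_prod_beta)
  also have "\<dots> = (\<Sum>p\<in>{1..r}\<times>{1..r}. \<Sum>k\<in>{1..4}. \<Sum>l\<in>{0..1}. f (fst p, snd p, k, l))"
    unfolding sum.cartesian_product by (intro sum.cong refl) (auto simp: case_prod_beta)
  finally show ?thesis .
qed

theorem lemma3:
  fixes C :: real and r :: nat
    and c :: "vtx \<Rightarrow> vtx \<Rightarrow> real" and d :: "vtx \<Rightarrow> real"
  assumes C_pos: "C > 0"
    and C_K44: "\<And>a :: nat \<Rightarrow> nat \<Rightarrow> real.
                  K44_min a \<le> - C * (\<Sum>i\<in>{1..4}. \<Sum>j\<in>{1..4}. \<bar>a i j\<bar>)"
    and r_pos: "r \<ge> 1"
  shows "ground_energy r c d \<le>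
           (\<Sum>e\<in>chimera_E0 r. \<bar>c (fst e) (snd e)\<bar>)
         + (\<Sum>e\<in>chimera_E1 r. \<bar>c (fst e) (snd e)\<bar>)
         - C * (\<Sum>e\<in>chimera_E01 r. \<bar>c (fst e) (snd e)\<bar>)"
proof -
  define a where "a i j = (\<lambda>k0 k1. c (i,j,k0,0) (i,j,k1,1))" for i j
  define T :: "vtx \<Rightarrow> real" where "T = (\<lambda>(i,j,k,l). if l = 0 then fst (pick (a i j)) k else snd (pick (a i j)) k)"
  define eps :: "nat \<Rightarrow> nat \<Rightarrow> real" where
    "eps i j = (if (\<Sum>k\<in>{1..4}. \<Sum>l\<in>{0..1}. d (i,j,k,l) * T (i,j,k,l)) \<le> 0 then 1 else -1)" for i j
  define S where "S = restrict (\<lambda>(i,j,k,l). eps i j * T (i,j,k,l)) (chimera_V r)"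
  have T01: "T (i,j,k,l) \<in> {-1,1}" if "1 \<le> k" "k \<le> 4" for i j k l
  proof -
    have "fst (pick (a i j)) \<in> PS" "snd (pick (a i j)) \<in> PS" using pick[of "a i j"] by auto
    thus ?thesis using that unfolding T_def PS_def by auto
  qed
  have eps01: "eps i j \<in> {-1,1}" for i j unfolding eps_def by auto
  have SV: "S u \<in> {-1,1}" if "u \<in> chimera_V r" for u
  proof -
    obtain i j k l where u: "u = (i,j,k,l)" by (cases u) auto
    have "1 \<le> k" "k \<le> 4" using that u unfolding chimera_V_def by auto
    hence "T (i,j,k,l) \<in> {-1,1}" by (rule T01)
    thus ?thesis using that u eps01[of i j] unfolding S_def by auto
  qed
  have Sin: "S \<in> chimera_V r \<rightarrow>\<^sub>E {-1,1}" using SV unfolding S_def by auto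
  have fin: "finite (chimera_V r \<rightarrow>\<^sub>E {-1::real,1})" using finV by (intro finite_PiE) auto
  have g: "ground_energy r c d \<le> ising_energy r c d S"
    unfolding ground_energy_def using fin Sin by (intro Min_le) auto
  have bnd: "c u v * S u * S v \<le> \<bar>c u v\<bar>" if "u \<in> chimera_V r" "v \<in> chimera_V r" for u v
    using SV[OF that(1)] SV[OF that(2)] by auto
  have finE: "finite (chimera_V r \<times> chimera_V r)" using finV by auto
  have fE0: "finite (chimera_E0 r)" using finite_subset[OF E0_sub[OF r_pos] finE] .
  have fE1: "finite (chimera_E1 r)" using finite_subset[OF E1_sub[OF r_pos] finE] .
  have fE01: "finite (chimera_E01 r)" using finite_subset[OF E01_sub finE] .
  have d1: "chimera_E0 r \<inter> chimera_E1 r = {}" unfolding chimera_E0_def chimera_E1_def by auto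
  have d2: "(chimera_E0 r \<union> chimera_E1 r) \<inter> chimera_E01 r = {}"
    unfolding chimera_E0_def chimera_E1_def chimera_E01_def by auto
  let ?f = "\<lambda>e. c (fst e) (snd e) * S (fst e) * S (snd e)"
  have split: "(\<Sum>e\<in>chimera_E r. ?f e) = (\<Sum>e\<in>chimera_E0 r. ?f e) + (\<Sum>e\<in>chimera_E1 r. ?f e) + (\<Sum>e\<in>chimera_E01 r. ?f e)"
    unfolding chimera_E_def using fE0 fE1 fE01 d1 d2 by (simp add: sum.union_disjoint)
  have b0: "(\<Sum>e\<in>chimera_E0 r. ?f e) \<le> (\<Sum>e\<in>chimera_E0 r. \<bar>c (fst e) (snd e)\<bar>)"
    using E0_sub[OF r_pos] by (intro sum_mono bnd) auto
  have b1: "(\<Sum>e\<in>chimera_E1 r. ?f e) \<le> (\<Sum>e\<in>chimera_E1 r. \<bar>c (fst e) (snd e)\<bar>)"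
    using E1_sub[OF r_pos] by (intro sum_mono bnd) auto
  have b01: "(\<Sum>e\<in>chimera_E01 r. ?f e) \<le> - C * (\<Sum>e\<in>chimera_E01 r. \<bar>c (fst e) (snd e)\<bar>)"
  proof -
    have cell: "(\<Sum>k0\<in>{1..4}. \<Sum>k1\<in>{1..4}. ?f ((i, j, k0, 0), (i, j, k1, 1)))
        \<le> - C * (\<Sum>k0\<in>{1..4}. \<Sum>k1\<in>{1..4}. \<bar>c (i, j, k0, 0) (i, j, k1, 1)\<bar>)"
      if "(i,j) \<in> {1..r}\<times>{1..r}" for i j
    proof -
      have ee: "eps i j * eps i j = 1" using eps01[of i j] by auto
      have "(\<Sum>k0\<in>{1..4}. \<Sum>k1\<in>{1..4}. ?f ((i, j, k0, 0), (i, j, k1, 1)))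
          = (\<Sum>k0\<in>{1..4::nat}. \<Sum>k1\<in>{1..4::nat}. a i j k0 k1 * fst (pick (a i j)) k0 * snd (pick (a i j)) k1)"
      proof (intro sum.cong refl)
        fix k0 k1 :: nat assume "k0 \<in> {1..4}" "k1 \<in> {1..4}"
        hence "(i,j,k0,0) \<in> chimera_V r" "(i,j,k1,1) \<in> chimera_V r" using that unfolding chimera_V_def by auto
        hence "S (i,j,k0,0) = eps i j * fst (pick (a i j)) k0" "S (i,j,k1,1) = eps i j * snd (pick (a i j)) k1"
          unfolding S_def T_def by auto
        thus "?f ((i, j, k0, 0), (i, j, k1, 1)) = a i j k0 k1 * fst (pick (a i j)) k0 * snd (pick (a i j)) k1"
          using ee unfolding a_def by (simp add: algebra_simps)
      qed
      also have "\<dots> = K44val (a i j) (pick (a i j))" unfolding K44val_def by (simp add: case_prod_beta)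
      also have "\<dots> = K44_min (a i j)" using pick by blast
      also have "\<dots> \<le> - C * (\<Sum>k0\<in>{1..4}. \<Sum>k1\<in>{1..4}. \<bar>a i j k0 k1\<bar>)" by (rule C_K44)
      finally show ?thesis unfolding a_def .
    qed
    have "(\<Sum>e\<in>chimera_E01 r. ?f e) \<le> (\<Sum>p\<in>{1..r}\<times>{1..r}. - C * (\<Sum>k0\<in>{1..4}. \<Sum>k1\<in>{1..4}. \<bar>c (fst p, snd p, k0, 0) (fst p, snd p, k1, 1)\<bar>))"
      unfolding sum_E01 by (intro sum_mono) (use cell in auto)
    also have "\<dots> = - C * (\<Sum>e\<in>chimera_E01 r. \<bar>c (fst e) (snd e)\<bar>)"
      unfolding sum_E01[of _ r] by (simp add: sum_distrib_left)
    finally show ?thesis .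
  qed
  have bd: "(\<Sum>u\<in>chimera_V r. d u * S u) \<le> 0"
  proof -
    have "(\<Sum>u\<in>chimera_V r. d u * S u) = (\<Sum>p\<in>{1..r}\<times>{1..r}. \<Sum>k\<in>{1..4}. \<Sum>l\<in>{0..1}. d (fst p, snd p, k, l) * S (fst p, snd p, k, l))"
      by (rule sum_V)
    also have "\<dots> \<le> (\<Sum>p\<in>{1..r}\<times>{1..r}. 0)"
    proof (intro sum_mono)
      fix p assume p: "p \<in> {1..r}\<times>{1..r}"
      obtain i j where pij: "p = (i,j)" by (cases p)
      have "(\<Sum>k\<in>{1..4}. \<Sum>l\<in>{0..1}. d (i, j, k, l) * S (i, j, k, l))
          = eps i j * (\<Sum>k\<in>{1..4}. \<Sum>l\<in>{0..1}. d (i,j,k,l) * T (i,j,k,l))"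
        unfolding sum_distrib_left
      proof (intro sum.cong refl)
        fix k l :: nat assume "k \<in> {1..4}" "l \<in> {0..1}"
        hence "(i,j,k,l) \<in> chimera_V r" using p pij unfolding chimera_V_def by auto
        thus "d (i, j, k, l) * S (i, j, k, l) = eps i j * (d (i,j,k,l) * T (i,j,k,l))"
          unfolding S_def by auto
      qed
      also have "\<dots> \<le> 0" unfolding eps_def by (auto simp: mult_le_0_iff)
      finally show "(\<Sum>k\<in>{1..4}. \<Sum>l\<in>{0..1}. d (fst p, snd p, k, l) * S (fst p, snd p, k, l)) \<le> 0"
        using pij by simp
    qed
    finally show ?thesis by simp
  qed
  have "ising_energy r c d S \<le> (\<Sum>e\<in>chimera_E0 r. \<bar>c (fst e) (snd e)\<bar>)
         + (\<Sum>e\<in>chimera_E1 r. \<bar>c (fst e) (snd e)\<bar>)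
         - C * (\<Sum>e\<in>chimera_E01 r. \<bar>c (fst e) (snd e)\<bar>)"
    unfolding ising_energy_def split using b0 b1 b01 bd by linarith
  thus ?thesis using g by linarith
qed

end
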